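(* Let $B$ be a skew left brace, $S$ a subbrace and $I$ an ideal of $B$ such that $I$ is an abelian brace and $B=SI=S+I$. Then (1) $I\cap S$ is an ideal of $B$; and (2) $S$ is a maximal subbrace of $B$ if and only if $I/(I\cap S)$ is a chief factor of $B$.
   Context: A skew left brace (brace) is a set $B$ with two group structures $(B,+)$ and $(B,\cdot)$ with $a(b+c)=ab-a+ac$; $\lambda_a(b)=-a+ab$. A subbrace is a subset that is a subgroup of both groups; a maximal subbrace is a proper subbrace not contained in any other proper subbrace. An ideal is a subset that is a normal subgroup of both groups and $\lambda_b$-invariant for all $b$. A brace $I$ is abelian if $xy=x+y=y+x$ for all $x,y\in I$. For ideals $J\subseteq I$ of $B$, $I/J$ is a chief factor of $B$ if $I/J$ is a minimal nonzero ideal of $B/J$ (i.e. $J\ne I$ and no ideal $L$ of $B$ satisfies $J\subsetneq L\subsetneq I$). *)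

theory Defs
  imports "HOL-Algebra.Coset"
begin

text \<open>A skew left brace is represented by two HOL-Algebra monoid structures on the same
carrier: A (the additive group (B,+)) and M (the multiplicative group (B,.)).\<close>

definition skew_brace :: "'a monoid \<Rightarrow> 'a monoid \<Rightarrow> bool" where
  "skew_brace A M \<longleftrightarrow> group A \<and> group M \<and> carrier A = carrier M \<and>
     (\<forall>a\<in>carrier A. \<forall>b\<in>carrier A. \<forall>c\<in>carrier A.
        a \<otimes>\<^bsub>M\<^esub> (b \<otimes>\<^bsub>A\<^esub> c)
        = ((a \<otimes>\<^bsub>M\<^esub> b) \<otimes>\<^bsub>A\<^esub> inv\<^bsub>A\<^esub> a) \<otimes>\<^bsub>A\<^esub> (a \<otimes>\<^bsub>M\<^esub> c))"

definition brace_lambda :: "'a monoid \<Rightarrow> 'a monoid \<Rightarrow> 'a \<Rightarrow> 'a \<Rightarrow> 'a" where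
  "brace_lambda A M a b = inv\<^bsub>A\<^esub> a \<otimes>\<^bsub>A\<^esub> (a \<otimes>\<^bsub>M\<^esub> b)"

definition subbrace :: "'a monoid \<Rightarrow> 'a monoid \<Rightarrow> 'a set \<Rightarrow> bool" where
  "subbrace A M S \<longleftrightarrow> subgroup S A \<and> subgroup S M"

definition maximal_subbrace :: "'a monoid \<Rightarrow> 'a monoid \<Rightarrow> 'a set \<Rightarrow> bool" where
  "maximal_subbrace A M S \<longleftrightarrow> subbrace A M S \<and> S \<noteq> carrier A \<and>
     (\<forall>T. subbrace A M T \<and> S \<subseteq> T \<and> T \<noteq> carrier A \<longrightarrow> T = S)"

definition brace_ideal :: "'a monoid \<Rightarrow> 'a monoid \<Rightarrow> 'a set \<Rightarrow> bool" where
  "brace_ideal A M I \<longleftrightarrow> I \<lhd> A \<and> I \<lhd> M \<and>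
     (\<forall>b\<in>carrier A. \<forall>x\<in>I. brace_lambda A M b x \<in> I)"

definition abelian_sub :: "'a monoid \<Rightarrow> 'a monoid \<Rightarrow> 'a set \<Rightarrow> bool" where
  "abelian_sub A M I \<longleftrightarrow> (\<forall>x\<in>I. \<forall>y\<in>I.
     x \<otimes>\<^bsub>M\<^esub> y = x \<otimes>\<^bsub>A\<^esub> y \<and> x \<otimes>\<^bsub>A\<^esub> y = y \<otimes>\<^bsub>A\<^esub> x)"

definition chief_factor :: "'a monoid \<Rightarrow> 'a monoid \<Rightarrow> 'a set \<Rightarrow> 'a set \<Rightarrow> bool" where
  "chief_factor A M I J \<longleftrightarrow> brace_ideal A M I \<and> brace_ideal A M J \<and> J \<subseteq> I \<and> J \<noteq> I \<and>
     \<not> (\<exists>L. brace_ideal A M L \<and> J \<subset> L \<and> L \<subset> I)"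

end

theory Submission
  imports Defs "HOL-Algebra.SndIsomorphismGrp"
begin

lemma brace_basics:
  assumes "skew_brace A M"
  shows "group A" "group M" "carrier M = carrier A" "\<one>\<^bsub>M\<^esub> = \<one>\<^bsub>A\<^esub>"
proof -
  show gA: "group A" and gM: "group M" and c: "carrier M = carrier A"
    using assms unfolding skew_brace_def by auto
  interpret a: group A by (rule gA)
  interpret m: group M by (rule gM)
  have ax: "\<one>\<^bsub>M\<^esub> \<otimes>\<^bsub>M\<^esub> (\<one>\<^bsub>A\<^esub> \<otimes>\<^bsub>A\<^esub> \<one>\<^bsub>A\<^esub>)
        = ((\<one>\<^bsub>M\<^esub> \<otimes>\<^bsub>M\<^esub> \<one>\<^bsub>A\<^esub>) \<otimes>\<^bsub>A\<^esub> inv\<^bsub>A\<^esub> \<one>\<^bsub>M\<^esub>) \<otimes>\<^bsub>A\<^esub> (\<one>\<^bsub>M\<^esub> \<otimes>\<^bsub>M\<^esub> \<one>\<^bsub>A\<^esub>)"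
    using assms c unfolding skew_brace_def by (metis a.one_closed m.one_closed)
  have o: "\<one>\<^bsub>A\<^esub> \<in> carrier M" "\<one>\<^bsub>M\<^esub> \<in> carrier A" using c by auto
  from ax have "\<one>\<^bsub>A\<^esub> = inv\<^bsub>A\<^esub> \<one>\<^bsub>M\<^esub>"
    using o by simp
  then have "inv\<^bsub>A\<^esub> \<one>\<^bsub>A\<^esub> = \<one>\<^bsub>M\<^esub>" using o by (metis a.inv_inv)
  then show "\<one>\<^bsub>M\<^esub> = \<one>\<^bsub>A\<^esub>" by simp
qed

lemma (in group) conj_comm:
  assumes "s \<in> carrier G" "i \<in> carrier G" "x \<in> carrier G" "i \<otimes> x = x \<otimes> i"
  shows "(s \<otimes> i) \<otimes> x \<otimes> inv (s \<otimes> i) = s \<otimes> x \<otimes> inv s"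
proof -
  have "(s \<otimes> i) \<otimes> x \<otimes> inv (s \<otimes> i) = s \<otimes> (i \<otimes> x) \<otimes> (inv i \<otimes> inv s)"
    using assms by (simp add: inv_mult_group m_assoc)
  also have "\<dots> = s \<otimes> (x \<otimes> i) \<otimes> (inv i \<otimes> inv s)"
    using assms by simp
  also have "\<dots> = s \<otimes> x \<otimes> ((i \<otimes> inv i) \<otimes> inv s)"
    using assms by (simp add: m_assoc, simp add: m_assoc[symmetric])
  also have "\<dots> = s \<otimes> x \<otimes> inv s" using assms by simp
  finally show ?thesis .
qed

lemma ideal_inter:
  assumes B: "skew_brace A M" and T: "subbrace A M T" and I: "brace_ideal A M I"
    and ab: "abelian_sub A M I"
    and TM: "carrier A \<subseteq> T <#>\<^bsub>M\<^esub> I" and TA: "carrier A \<subseteq> T <#>\<^bsub>A\<^esub> I"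
  shows "brace_ideal A M (I \<inter> T)"
proof -
  interpret a: group A using brace_basics[OF B] by simp
  interpret m: group M using brace_basics[OF B] by simp
  have cM: "carrier M = carrier A" using brace_basics[OF B] by simp
  have bax: "\<And>a b c. a \<in> carrier A \<Longrightarrow> b \<in> carrier A \<Longrightarrow> c \<in> carrier A \<Longrightarrow>
        a \<otimes>\<^bsub>M\<^esub> (b \<otimes>\<^bsub>A\<^esub> c)
        = ((a \<otimes>\<^bsub>M\<^esub> b) \<otimes>\<^bsub>A\<^esub> inv\<^bsub>A\<^esub> a) \<otimes>\<^bsub>A\<^esub> (a \<otimes>\<^bsub>M\<^esub> c)"
    using B unfolding skew_brace_def by blast
  have TsA: "subgroup T A" and TsM: "subgroup T M" using T unfolding subbrace_def by auto
  have INA: "I \<lhd> A" and INM: "I \<lhd> M"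
    and lam: "\<And>b x. b \<in> carrier A \<Longrightarrow> x \<in> I \<Longrightarrow> brace_lambda A M b x \<in> I"
    using I unfolding brace_ideal_def by auto
  have IsA: "subgroup I A" and IsM: "subgroup I M"
    using INA INM normal_imp_subgroup by auto
  have IcA: "\<And>x. x \<in> I \<Longrightarrow> x \<in> carrier A" using subgroup.mem_carrier[OF IsA] by blast
  have TcA: "\<And>x. x \<in> T \<Longrightarrow> x \<in> carrier A" using subgroup.mem_carrier[OF TsA] by blast
  have commA: "\<And>x y. x \<in> I \<Longrightarrow> y \<in> I \<Longrightarrow> x \<otimes>\<^bsub>A\<^esub> y = y \<otimes>\<^bsub>A\<^esub> x"
    and meq: "\<And>x y. x \<in> I \<Longrightarrow> y \<in> I \<Longrightarrow> x \<otimes>\<^bsub>M\<^esub> y = x \<otimes>\<^bsub>A\<^esub> y"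
    using ab unfolding abelian_sub_def by auto
  have commM: "\<And>x y. x \<in> I \<Longrightarrow> y \<in> I \<Longrightarrow> x \<otimes>\<^bsub>M\<^esub> y = y \<otimes>\<^bsub>M\<^esub> x"
    using commA meq by simp
  have nA: "I \<inter> T \<lhd> A"
    unfolding a.normal_inv_iff
  proof (intro conjI ballI)
    show "subgroup (I \<inter> T) A" using a.subgroups_Inter_pair IsA TsA by blast
    fix b h assume b: "b \<in> carrier A" and h: "h \<in> I \<inter> T"
    from b TA obtain s i where s: "s \<in> T" and i: "i \<in> I" and bsi: "b = s \<otimes>\<^bsub>A\<^esub> i"
      unfolding set_mult_def by blast
    have "b \<otimes>\<^bsub>A\<^esub> h \<otimes>\<^bsub>A\<^esub> inv\<^bsub>A\<^esub> b = s \<otimes>\<^bsub>A\<^esub> h \<otimes>\<^bsub>A\<^esub> inv\<^bsub>A\<^esub> s"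
      unfolding bsi using s i h TcA IcA commA by (intro a.conj_comm) auto
    moreover have "s \<otimes>\<^bsub>A\<^esub> h \<otimes>\<^bsub>A\<^esub> inv\<^bsub>A\<^esub> s \<in> I"
      using a.normal_invE(2)[OF INA] s h TcA by blast
    moreover have "s \<otimes>\<^bsub>A\<^esub> h \<otimes>\<^bsub>A\<^esub> inv\<^bsub>A\<^esub> s \<in> T"
      using s h TsA by (simp add: subgroup.m_closed subgroup.m_inv_closed)
    ultimately show "b \<otimes>\<^bsub>A\<^esub> h \<otimes>\<^bsub>A\<^esub> inv\<^bsub>A\<^esub> b \<in> I \<inter> T" by simp
  qed
  have nM: "I \<inter> T \<lhd> M"
    unfolding m.normal_inv_iff
  proof (intro conjI ballI)
    show "subgroup (I \<inter> T) M" using m.subgroups_Inter_pair IsM TsM by blast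
    fix b h assume b: "b \<in> carrier M" and h: "h \<in> I \<inter> T"
    from b cM TM obtain s i where s: "s \<in> T" and i: "i \<in> I" and bsi: "b = s \<otimes>\<^bsub>M\<^esub> i"
      unfolding set_mult_def by blast
    have "b \<otimes>\<^bsub>M\<^esub> h \<otimes>\<^bsub>M\<^esub> inv\<^bsub>M\<^esub> b = s \<otimes>\<^bsub>M\<^esub> h \<otimes>\<^bsub>M\<^esub> inv\<^bsub>M\<^esub> s"
      unfolding bsi using s i h TcA IcA commM cM by (intro m.conj_comm) auto
    moreover have "s \<otimes>\<^bsub>M\<^esub> h \<otimes>\<^bsub>M\<^esub> inv\<^bsub>M\<^esub> s \<in> I"
      using m.normal_invE(2)[OF INM] s h TcA cM by blast
    moreover have "s \<otimes>\<^bsub>M\<^esub> h \<otimes>\<^bsub>M\<^esub> inv\<^bsub>M\<^esub> s \<in> T"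
      using s h TsM by (simp add: subgroup.m_closed subgroup.m_inv_closed)
    ultimately show "b \<otimes>\<^bsub>M\<^esub> h \<otimes>\<^bsub>M\<^esub> inv\<^bsub>M\<^esub> b \<in> I \<inter> T" by simp
  qed
  have "brace_lambda A M b x \<in> I \<inter> T" if b: "b \<in> carrier A" and x: "x \<in> I \<inter> T" for b x
  proof -
    from b TM obtain s i where s: "s \<in> T" and i: "i \<in> I" and bsi: "b = s \<otimes>\<^bsub>M\<^esub> i"
      unfolding set_mult_def by blast
    have sc: "s \<in> carrier A" "i \<in> carrier A" "x \<in> carrier A" using s i x TcA IcA by auto
    define y where "y = (s \<otimes>\<^bsub>M\<^esub> x) \<otimes>\<^bsub>A\<^esub> inv\<^bsub>A\<^esub> s"
    have "b \<otimes>\<^bsub>M\<^esub> x = s \<otimes>\<^bsub>M\<^esub> (i \<otimes>\<^bsub>M\<^esub> x)" unfolding bsi using sc cM by (simp add: m.m_assoc)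
    also have "\<dots> = s \<otimes>\<^bsub>M\<^esub> (x \<otimes>\<^bsub>A\<^esub> i)" using commM meq i x by auto
    also have "\<dots> = y \<otimes>\<^bsub>A\<^esub> b" unfolding y_def bsi using bax sc by blast
    finally have bx: "b \<otimes>\<^bsub>M\<^esub> x = y \<otimes>\<^bsub>A\<^esub> b" .
    have yc: "y \<in> carrier A" unfolding y_def using sc cM by auto
    have lb: "brace_lambda A M b x = inv\<^bsub>A\<^esub> b \<otimes>\<^bsub>A\<^esub> y \<otimes>\<^bsub>A\<^esub> inv\<^bsub>A\<^esub> (inv\<^bsub>A\<^esub> b)"
      unfolding brace_lambda_def bx using b yc by (simp add: a.m_assoc)
    have "y \<in> T" unfolding y_def using s x TsA TsM
      by (simp add: subgroup.m_closed subgroup.m_inv_closed)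
    moreover have "y \<in> I"
    proof -
      have "y = s \<otimes>\<^bsub>A\<^esub> brace_lambda A M s x \<otimes>\<^bsub>A\<^esub> inv\<^bsub>A\<^esub> s"
      proof -
        have z: "s \<otimes>\<^bsub>M\<^esub> x \<in> carrier A" using sc cM m.m_closed by auto
        have "s \<otimes>\<^bsub>A\<^esub> (inv\<^bsub>A\<^esub> s \<otimes>\<^bsub>A\<^esub> (s \<otimes>\<^bsub>M\<^esub> x)) = s \<otimes>\<^bsub>M\<^esub> x"
          using z sc(1) by (simp add: a.m_assoc[symmetric])
        then show ?thesis unfolding y_def brace_lambda_def by simp
      qed
      moreover have "brace_lambda A M s x \<in> I" using lam sc x by blast
      ultimately show ?thesis using a.normal_invE(2)[OF INA] sc by simp
    qed
    ultimately have "y \<in> I \<inter> T" by simp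
    then show ?thesis unfolding lb using a.normal_invE(2)[OF nA, of "inv\<^bsub>A\<^esub> b" y] b by simp
  qed
  then show ?thesis unfolding brace_ideal_def using nA nM by blast
qed

lemma sm_subgroup:
  assumes "L \<lhd> G" "subgroup S G"
  shows "subgroup (S <#>\<^bsub>G\<^esub> L) G"
proof -
  have g: "group G" using assms(1) normal.axioms(2) by blast
  have "S <#>\<^bsub>G\<^esub> L = L <#>\<^bsub>G\<^esub> S" using group.commut_normal[OF g assms(2,1)] .
  moreover have "second_isomorphism_grp L G S"
    unfolding second_isomorphism_grp_def second_isomorphism_grp_axioms_def using assms by simp
  ultimately show ?thesis using second_isomorphism_grp.normal_set_mult_subgroup by metis
qed

lemma set_multI: "x \<in> X \<Longrightarrow> y \<in> Y \<Longrightarrow> z = x \<otimes>\<^bsub>G\<^esub> y \<Longrightarrow> z \<in> X <#>\<^bsub>G\<^esub> Y"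
  unfolding set_mult_def by blast

lemma set_multE: "z \<in> X <#>\<^bsub>G\<^esub> Y \<Longrightarrow> (\<And>x y. x \<in> X \<Longrightarrow> y \<in> Y \<Longrightarrow> z = x \<otimes>\<^bsub>G\<^esub> y \<Longrightarrow> P) \<Longrightarrow> P"
  unfolding set_mult_def by blast

lemma set_mult_sub: "subgroup H G \<Longrightarrow> X \<subseteq> H \<Longrightarrow> Y \<subseteq> H \<Longrightarrow> X <#>\<^bsub>G\<^esub> Y \<subseteq> H"
  by (auto elim!: set_multE intro: subgroup.m_closed)

theorem lemma4p10:
  fixes A M :: "'a monoid" and S I :: "'a set"
  assumes "skew_brace A M"
    and "subbrace A M S"
    and "brace_ideal A M I"
    and "abelian_sub A M I"
    and "S <#>\<^bsub>M\<^esub> I = carrier A"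
    and "S <#>\<^bsub>A\<^esub> I = carrier A"
  shows "brace_ideal A M (I \<inter> S) \<and>
         (maximal_subbrace A M S \<longleftrightarrow> chief_factor A M I (I \<inter> S))"
proof -
  note B = assms(1) and Ssb = assms(2) and Iid = assms(3) and ab = assms(4)
    and SM = assms(5) and SA = assms(6)
  interpret a: group A using brace_basics[OF B] by simp
  interpret m: group M using brace_basics[OF B] by simp
  have cM: "carrier M = carrier A" using brace_basics[OF B] by simp
  have one: "\<one>\<^bsub>M\<^esub> = \<one>\<^bsub>A\<^esub>" using brace_basics[OF B] by simp
  have bax: "\<And>a b c. a \<in> carrier A \<Longrightarrow> b \<in> carrier A \<Longrightarrow> c \<in> carrier A \<Longrightarrow>
        a \<otimes>\<^bsub>M\<^esub> (b \<otimes>\<^bsub>A\<^esub> c)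
        = ((a \<otimes>\<^bsub>M\<^esub> b) \<otimes>\<^bsub>A\<^esub> inv\<^bsub>A\<^esub> a) \<otimes>\<^bsub>A\<^esub> (a \<otimes>\<^bsub>M\<^esub> c)"
    using B unfolding skew_brace_def by blast
  have SsA: "subgroup S A" and SsM: "subgroup S M" using Ssb unfolding subbrace_def by auto
  have IsA: "subgroup I A"
    using Iid normal_imp_subgroup unfolding brace_ideal_def by blast
  have ScA: "\<And>x. x \<in> S \<Longrightarrow> x \<in> carrier A" using subgroup.mem_carrier[OF SsA] by blast
  have IcA: "\<And>x. x \<in> I \<Longrightarrow> x \<in> carrier A" using subgroup.mem_carrier[OF IsA] by blast
  have id1: "brace_ideal A M (I \<inter> S)"
    using ideal_inter[OF B Ssb Iid ab] SM SA by simp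
  have IS: "I \<subseteq> S \<longleftrightarrow> S = carrier A"
  proof
    assume "I \<subseteq> S"
    then have "S <#>\<^bsub>A\<^esub> I \<subseteq> S"
      using set_mult_sub[OF SsA] by blast
    then show "S = carrier A" using SA ScA by blast
  next
    assume "S = carrier A" then show "I \<subseteq> S" using IcA by blast
  qed
  have "maximal_subbrace A M S \<longleftrightarrow> chief_factor A M I (I \<inter> S)"
  proof
    assume mx: "maximal_subbrace A M S"
    have Sne: "S \<noteq> carrier A" using mx unfolding maximal_subbrace_def by blast
    have ne: "I \<inter> S \<noteq> I" using IS Sne by blast
    have "\<not> (\<exists>L. brace_ideal A M L \<and> I \<inter> S \<subset> L \<and> L \<subset> I)"
    proof
      assume "\<exists>L. brace_ideal A M L \<and> I \<inter> S \<subset> L \<and> L \<subset> I"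
      then obtain L where Lid: "brace_ideal A M L" and L1: "I \<inter> S \<subset> L" and L2: "L \<subset> I" by blast
      have LnA: "L \<lhd> A" and LnM: "L \<lhd> M"
        and lam: "\<And>b x. b \<in> carrier A \<Longrightarrow> x \<in> L \<Longrightarrow> brace_lambda A M b x \<in> L"
        using Lid unfolding brace_ideal_def by auto
      have LsA: "subgroup L A" using LnA normal_imp_subgroup by blast
      have LcA: "\<And>x. x \<in> L \<Longrightarrow> x \<in> carrier A" using L2 IcA by blast
      define T where "T = S <#>\<^bsub>A\<^esub> L"
      have TA: "subgroup T A" unfolding T_def by (rule sm_subgroup[OF LnA SsA])
      have TeqM: "T = S <#>\<^bsub>M\<^esub> L"
      proof
        show "T \<subseteq> S <#>\<^bsub>M\<^esub> L"
        proof
          fix t assume "t \<in> T"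
          then obtain s l where s: "s \<in> S" and l: "l \<in> L" and t: "t = s \<otimes>\<^bsub>A\<^esub> l"
            unfolding T_def by (rule set_multE)
          have sc: "s \<in> carrier A" "l \<in> carrier A" using s l ScA LcA by auto
          define s' where "s' = inv\<^bsub>M\<^esub> s"
          have s'c: "s' \<in> carrier A" unfolding s'_def using m.inv_closed[of s] sc cM by simp
          have "s' \<otimes>\<^bsub>M\<^esub> (s \<otimes>\<^bsub>A\<^esub> l) = (s' \<otimes>\<^bsub>M\<^esub> s \<otimes>\<^bsub>A\<^esub> inv\<^bsub>A\<^esub> s') \<otimes>\<^bsub>A\<^esub> (s' \<otimes>\<^bsub>M\<^esub> l)"
            using bax[OF s'c sc] .
          also have "\<dots> = brace_lambda A M s' l"
            using s'c one m.l_inv[of s] sc cM a.l_one[OF a.inv_closed[OF s'c]]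
            unfolding brace_lambda_def s'_def by simp
          finally have eq: "s' \<otimes>\<^bsub>M\<^esub> t = brace_lambda A M s' l" unfolding t .
          have tc: "t \<in> carrier M" using t sc cM a.m_closed[of s l] by simp
          have scM: "s \<in> carrier M" using sc cM by simp
          have "t = s \<otimes>\<^bsub>M\<^esub> (s' \<otimes>\<^bsub>M\<^esub> t)"
            unfolding s'_def using m.m_assoc[of s "inv\<^bsub>M\<^esub> s" t] m.r_inv[OF scM] m.l_one[OF tc]
              scM tc m.inv_closed[OF scM] by simp
          then have "t = s \<otimes>\<^bsub>M\<^esub> brace_lambda A M s' l" using eq by simp
          moreover have "brace_lambda A M s' l \<in> L" using lam s'c l by blast
          ultimately show "t \<in> S <#>\<^bsub>M\<^esub> L" using s by (intro set_multI)
        qed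
      next
        show "S <#>\<^bsub>M\<^esub> L \<subseteq> T"
        proof
          fix t assume "t \<in> S <#>\<^bsub>M\<^esub> L"
          then obtain s l where s: "s \<in> S" and l: "l \<in> L" and t: "t = s \<otimes>\<^bsub>M\<^esub> l"
            by (rule set_multE)
          have sc: "s \<in> carrier A" "l \<in> carrier A" using s l ScA LcA by auto
          have tc: "t \<in> carrier A" using t sc cM m.m_closed[of s l] by simp
          have "t = s \<otimes>\<^bsub>A\<^esub> brace_lambda A M s l"
            unfolding brace_lambda_def using sc tc t by (simp add: a.m_assoc[symmetric])
          moreover have "brace_lambda A M s l \<in> L" using lam sc l by blast
          ultimately show "t \<in> T" using s unfolding T_def by (intro set_multI)
        qed
      qed
      have TM: "subgroup T M" unfolding TeqM by (rule sm_subgroup[OF LnM SsM])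
      have STsub: "S \<subseteq> T"
      proof
        fix s assume s: "s \<in> S"
        have "s = s \<otimes>\<^bsub>A\<^esub> \<one>\<^bsub>A\<^esub>" using ScA[OF s] by simp
        moreover have "\<one>\<^bsub>A\<^esub> \<in> L" using subgroup.one_closed[OF LsA] .
        ultimately show "s \<in> T" using s unfolding T_def by (intro set_multI)
      qed
      have LT: "L \<subseteq> T"
      proof
        fix l assume l: "l \<in> L"
        have "l = \<one>\<^bsub>A\<^esub> \<otimes>\<^bsub>A\<^esub> l" using LcA[OF l] by simp
        moreover have "\<one>\<^bsub>A\<^esub> \<in> S" using subgroup.one_closed[OF SsA] .
        ultimately show "l \<in> T" using l unfolding T_def by (intro set_multI)
      qed
      have Tsb: "subbrace A M T" unfolding subbrace_def using TA TM by simp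
      show False
      proof (cases "T = carrier A")
        case True
        have "I \<subseteq> L"
        proof
          fix i assume i: "i \<in> I"
          then have "i \<in> T" using True IcA by blast
          then obtain s l where s: "s \<in> S" and l: "l \<in> L" and t: "i = s \<otimes>\<^bsub>A\<^esub> l"
            unfolding T_def by (rule set_multE)
          have sc: "s \<in> carrier A" "l \<in> carrier A" using s l ScA LcA by auto
          have "s = i \<otimes>\<^bsub>A\<^esub> inv\<^bsub>A\<^esub> l" using t sc by (simp add: a.m_assoc)
          moreover have "inv\<^bsub>A\<^esub> l \<in> I" using l L2 subgroup.m_inv_closed[OF IsA] by blast
          ultimately have "s \<in> I" using i subgroup.m_closed[OF IsA] by simp
          then have "s \<in> L" using s L1 by blast
          then show "i \<in> L" using t l subgroup.m_closed[OF LsA] by simp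
        qed
        then show False using L2 by blast
      next
        case False
        then have "T = S" using mx Tsb STsub unfolding maximal_subbrace_def by blast
        then have "L \<subseteq> I \<inter> S" using LT L2 by blast
        then show False using L1 by blast
      qed
    qed
    then show "chief_factor A M I (I \<inter> S)"
      unfolding chief_factor_def using Iid id1 ne by blast
  next
    assume cf: "chief_factor A M I (I \<inter> S)"
    have ne: "I \<inter> S \<noteq> I" and nL: "\<not> (\<exists>L. brace_ideal A M L \<and> I \<inter> S \<subset> L \<and> L \<subset> I)"
      using cf unfolding chief_factor_def by auto
    have Sne: "S \<noteq> carrier A" using IS ne by blast
    have "T = S" if Tsb: "subbrace A M T" and ST: "S \<subseteq> T" and Tne: "T \<noteq> carrier A" for T
    proof -
      have TsA: "subgroup T A" using Tsb unfolding subbrace_def by auto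
      have TcA: "\<And>x. x \<in> T \<Longrightarrow> x \<in> carrier A" using subgroup.mem_carrier[OF TsA] by blast
      have "carrier A \<subseteq> T <#>\<^bsub>M\<^esub> I" using SM mono_set_mult[OF ST, of I I M] by simp
      moreover have TAc: "carrier A \<subseteq> T <#>\<^bsub>A\<^esub> I" using SA mono_set_mult[OF ST, of I I A] by simp
      ultimately have idT: "brace_ideal A M (I \<inter> T)" using ideal_inter[OF B Tsb Iid ab] by simp
      have "I \<inter> S \<subseteq> I \<inter> T" using ST by blast
      moreover have "I \<inter> T \<noteq> I"
      proof
        assume "I \<inter> T = I"
        then have "I \<subseteq> T" by blast
        then have "S <#>\<^bsub>A\<^esub> I \<subseteq> T"
          using set_mult_sub[OF TsA] ST by blast
        then show False using SA TcA Tne by blast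
      qed
      moreover have "I \<inter> T \<subseteq> I" by blast
      ultimately have "I \<inter> T \<subset> I" by blast
      then have "\<not> I \<inter> S \<subset> I \<inter> T" using nL idT by blast
      then have eqT: "I \<inter> T = I \<inter> S" using \<open>I \<inter> S \<subseteq> I \<inter> T\<close> by blast
      show "T = S"
      proof
        show "T \<subseteq> S"
        proof
          fix t assume t: "t \<in> T"
          then have "t \<in> S <#>\<^bsub>A\<^esub> I" using SA TcA by blast
          then obtain s i where s: "s \<in> S" and i: "i \<in> I" and ts: "t = s \<otimes>\<^bsub>A\<^esub> i"
            by (rule set_multE)
          have sc: "s \<in> carrier A" "i \<in> carrier A" using s i ScA IcA by auto
          have "i = inv\<^bsub>A\<^esub> s \<otimes>\<^bsub>A\<^esub> t" using ts sc by (simp add: a.m_assoc[symmetric])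
          moreover have "inv\<^bsub>A\<^esub> s \<in> T" using s ST subgroup.m_inv_closed[OF TsA] by blast
          ultimately have "i \<in> T" using t subgroup.m_closed[OF TsA] by simp
          then have "i \<in> S" using i eqT by blast
          then show "t \<in> S" using ts s subgroup.m_closed[OF SsA] by simp
        qed
      qed (rule ST)
    qed
    then show "maximal_subbrace A M S"
      unfolding maximal_subbrace_def using Ssb Sne by blast
  qed
  then show ?thesis using id1 by blast
qed

end
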